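(* Let $m,n\in\mathbb{Z}$ with $\gcd(m,n)=1$, $mn(m+n)\neq0$, $c=-\frac{A(m,n)}{B(m,n)}$, and let $\{x_1,x_2,x_3\}$ be the rational $3$-cycle of $f_c(x)=x^2+c$ (its elements written in lowest terms). (a) The numerators of $x_1,x_2,x_3$ are pairwise relatively prime. (b) If a prime $p$ divides the numerator of some $x_i$, then $c$ is $p$-integral and $c^3+2c^2+c+1\equiv 0\pmod p$. (c) At most one of the numerators of $x_1,x_2,x_3$ equals $\pm1$.
   Context: $A(m,n)=m^6+2m^5n+4m^4n^2+8m^3n^3+9m^2n^4+4mn^5+n^6$, $B(m,n)=4m^2n^2(m+n)^2$. Standing fact: $f_c$ has a rational $3$-cycle (orbit of a rational point of minimal period $3$) iff $c=-A(m,n)/B(m,n)$ for coprime $m,n$ with $mn(m+n)\ne0$; it then has exactly one, namely $x_1=\frac{t_1}{2mn(m+n)}$, $x_2=\frac{t_2}{2mn(m+n)}$, $x_3=-\frac{t_3}{2mn(m+n)}$ with $t_1=m^3+2m^2n+mn^2+n^3$, $t_2=m^3-mn^2-n^3$, $t_3=m^3+2m^2n+3mn^2+n^3$, and these fractions are in lowest terms. *)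

theory Defs
  imports Complex_Main "HOL-Computational_Algebra.Primes"
begin

definition polyA :: "int \<Rightarrow> int \<Rightarrow> int" where
  "polyA m n = m^6 + 2*m^5*n + 4*m^4*n^2 + 8*m^3*n^3 + 9*m^2*n^4 + 4*m*n^5 + n^6"

definition polyB :: "int \<Rightarrow> int \<Rightarrow> int" where
  "polyB m n = 4*m^2*n^2*(m+n)^2"

definition cpar :: "int \<Rightarrow> int \<Rightarrow> rat" where
  "cpar m n = - (of_int (polyA m n) / of_int (polyB m n))"

definition fc :: "rat \<Rightarrow> rat \<Rightarrow> rat" where
  "fc c x = x^2 + c"

definition t1 :: "int \<Rightarrow> int \<Rightarrow> int" where "t1 m n = m^3 + 2*m^2*n + m*n^2 + n^3"
definition t2 :: "int \<Rightarrow> int \<Rightarrow> int" where "t2 m n = m^3 - m*n^2 - n^3"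
definition t3 :: "int \<Rightarrow> int \<Rightarrow> int" where "t3 m n = m^3 + 2*m^2*n + 3*m*n^2 + n^3"

text \<open>The (unique) rational 3-cycle x_1, x_2, x_3 of f_c, as given by the standing fact.\<close>
definition cyc :: "int \<Rightarrow> int \<Rightarrow> nat \<Rightarrow> rat" where
  "cyc m n i =
     (if i = 1 then of_int (t1 m n) / of_int (2*m*n*(m+n))
      else if i = 2 then of_int (t2 m n) / of_int (2*m*n*(m+n))
      else - (of_int (t3 m n) / of_int (2*m*n*(m+n))))"

definition num :: "rat \<Rightarrow> int" where "num q = fst (quotient_of q)"
definition den :: "rat \<Rightarrow> int" where "den q = snd (quotient_of q)"

end

theory Submission
  imports Defs
begin

lemma key:
  fixes s1 s2 s3 D A :: int
  assumes "s2*D = s1^2 - A" "s3*D = s2^2 - A" "s1*D = s3^2 - A"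
  shows "A*((D^2)^3 - A^3 + 2*A^2*D^2 - A*(D^2)^2) = s1*(s1*(s1^2-2*A)*(s1^2*(s1^2-2*A) + 2*A*(A-D^2)) - D^7)"
  using assms by algebra

lemma rels: fixes m n :: int shows
  "t2 m n * (2*m*n*(m+n)) = (t1 m n)^2 - polyA m n"
  "(- t3 m n) * (2*m*n*(m+n)) = (t2 m n)^2 - polyA m n"
  "t1 m n * (2*m*n*(m+n)) = (- t3 m n)^2 - polyA m n"
  by (simp_all add: t1_def t2_def t3_def polyA_def; algebra)+

lemma partb:
  fixes s1 s2 s3 D A p :: int
  assumes r1: "s2*D = s1^2 - A" and r2: "s3*D = s2^2 - A" and r3: "s1*D = s3^2 - A"
    and c1: "coprime s1 D" and c2: "coprime s1 s2" and pp: "prime p" and ps: "p dvd s1"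
  shows "\<not> p dvd D" "\<not> p dvd A" "p dvd ((D^2)^3 - A^3 + 2*A^2*D^2 - A*(D^2)^2)"
proof -
  show nD: "\<not> p dvd D"
    using c1 ps pp coprime_common_divisor not_prime_unit by blast
  show nA: "\<not> p dvd A"
  proof
    assume "p dvd A"
    then have "p dvd s2 * D" using r1 ps by (simp add: power2_eq_square)
    then have "p dvd s2" using nD pp prime_dvd_mult_iff by blast
    then show False using c2 ps pp coprime_common_divisor not_prime_unit by blast
  qed
  have "p dvd A*((D^2)^3 - A^3 + 2*A^2*D^2 - A*(D^2)^2)"
    unfolding key[OF r1 r2 r3] using ps by simp
  then show "p dvd ((D^2)^3 - A^3 + 2*A^2*D^2 - A*(D^2)^2)"
    using nA pp prime_dvd_mult_iff by blast
qed

lemma numden: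
  fixes a b :: int
  assumes "b \<noteq> 0"
  shows "a * den (of_int a / of_int b) = num (of_int a / of_int b) * b"
    "den (of_int a / of_int b) > 0" "coprime (num (of_int a / of_int b)) (den (of_int a / of_int b))"
proof -
  obtain n d where q: "quotient_of (of_int a / of_int b) = (n, d)" by (metis prod.exhaust)
  have d: "d > 0" using quotient_of_denom_pos[OF q] .
  have e: "(of_int a / of_int b :: rat) = of_int n / of_int d" using quotient_of_div[OF q] .
  have "(of_int (a*d) :: rat) = of_int (n*b)"
    using e d assms by (simp add: field_simps)
  then have "a*d = n*b" by (simp only: of_int_eq_iff)
  then show "a * den (of_int a / of_int b) = num (of_int a / of_int b) * b"
    "den (of_int a / of_int b) > 0" "coprime (num (of_int a / of_int b)) (den (of_int a / of_int b))"
    using q d quotient_of_coprime[OF q] by (simp_all add: num_def den_def)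
qed

lemma num_abs:
  fixes a b :: int
  assumes "b \<noteq> 0" "coprime a b"
  shows "\<bar>num (of_int a / of_int b)\<bar> = \<bar>a\<bar>"
proof -
  define n where "n = num (of_int a / of_int b :: rat)"
  define d where "d = den (of_int a / of_int b :: rat)"
  have e: "a*d = n*b" and cp: "coprime n d" using numden[OF assms(1), of a] by (simp_all add: n_def d_def)
  have "n dvd a*d" using e by simp
  then have "n dvd a" using cp coprime_dvd_mult_left_iff by blast
  moreover have "a dvd n*b" using e by (metis dvd_triv_left)
  then have "a dvd n" using assms(2) coprime_dvd_mult_left_iff by blast
  ultimately show ?thesis unfolding n_def[symmetric] using zdvd_antisym_abs by (metis abs_dvd_iff dvd_abs_iff abs_ge_zero)
qed

lemma num_dvd:
  fixes a b p :: int
  assumes "b \<noteq> 0" "prime p" "p dvd a" "\<not> p dvd b"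
  shows "p dvd num (of_int a / of_int b)"
proof -
  have "p dvd num (of_int a / of_int b) * b" using numden(1)[OF assms(1), of a] assms(3)
    by (metis dvd_mult2)
  then show ?thesis using assms prime_dvd_mult_iff by blast
qed

lemma den_dvd:
  fixes a b p :: int
  assumes "b \<noteq> 0" "prime p" "p dvd den (of_int a / of_int b)"
  shows "p dvd b"
proof -
  have cp: "coprime (num (of_int a / of_int b)) (den (of_int a / of_int b))" using numden(3)[OF assms(1)] .
  have "\<not> p dvd num (of_int a / of_int b)"
    using cp assms coprime_common_divisor not_prime_unit by blast
  moreover have "p dvd a * den (of_int a / of_int b)" using assms(3) by (rule dvd_mult)
  then have "p dvd num (of_int a / of_int b) * b" using numden(1)[OF assms(1), of a] by simp
  ultimately show ?thesis using assms prime_dvd_mult_iff by blast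
qed

lemma copshift:
  fixes x k a r :: int
  assumes "x = k*a + r" "coprime a r"
  shows "coprime x a"
proof -
  have "gcd a x = gcd a r" using assms(1) gcd_add_mult by simp
  then show ?thesis using assms(2) by (simp add: coprime_iff_gcd_eq_1 gcd.commute)
qed

lemma odd_t:
  fixes m n :: int
  assumes "coprime m n"
  shows "odd (t1 m n)" "odd (t2 m n)" "odd (t3 m n)"
proof -
  have "odd m \<or> odd n"
  proof (rule ccontr)
    assume "\<not> (odd m \<or> odd n)"
    then have "is_unit (2::int)" using assms coprime_common_divisor by auto
    then show False by simp
  qed
  then show "odd (t1 m n)" "odd (t2 m n)" "odd (t3 m n)"
    by (auto simp: t1_def t2_def t3_def)
qed


lemma copfacts:
  fixes m n :: int
  assumes cmn: "coprime m n"
  shows "coprime (t1 m n) m" "coprime (t1 m n) n" "coprime (t1 m n) (m+n)" "coprime (t1 m n) 2"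
        "coprime (t2 m n) m" "coprime (t2 m n) n" "coprime (t2 m n) (m+n)" "coprime (t2 m n) 2"
        "coprime (t3 m n) m" "coprime (t3 m n) n" "coprime (t3 m n) (m+n)" "coprime (t3 m n) 2"
proof -
  have a1: "coprime m (n^3)" "coprime m (-(n^3))" using cmn by simp_all
  have a2: "coprime n (m^3)" using cmn by (simp add: coprime_commute)
  have "gcd (m+n) n = gcd m n" by simp
  then have "coprime (m+n) n" using cmn by (simp add: coprime_iff_gcd_eq_1)
  then have a3: "coprime (m+n) (n^3)" "coprime (m+n) (-(n^3))" by simp_all
  show "coprime (t1 m n) m" by (rule copshift[OF _ a1(1), of _ "m^2+2*m*n+n^2"]) (simp add: t1_def algebra_simps power3_eq_cube power2_eq_square)
  show "coprime (t1 m n) n" by (rule copshift[OF _ a2, of _ "2*m^2+m*n+n^2"]) (simp add: t1_def algebra_simps power3_eq_cube power2_eq_square)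
  show "coprime (t1 m n) (m+n)" by (rule copshift[OF _ a3(1), of _ "m*(m+n)"]) (simp add: t1_def algebra_simps power3_eq_cube power2_eq_square)
  show "coprime (t2 m n) m" by (rule copshift[OF _ a1(2), of _ "m^2-n^2"]) (simp add: t2_def algebra_simps power3_eq_cube power2_eq_square)
  show "coprime (t2 m n) n" by (rule copshift[OF _ a2, of _ "-m*n-n^2"]) (simp add: t2_def algebra_simps power3_eq_cube power2_eq_square)
  show "coprime (t2 m n) (m+n)" by (rule copshift[OF _ a3(2), of _ "m*(m-n)"]) (simp add: t2_def algebra_simps power3_eq_cube power2_eq_square)
  show "coprime (t3 m n) m" by (rule copshift[OF _ a1(1), of _ "m^2+2*m*n+3*n^2"]) (simp add: t3_def algebra_simps power3_eq_cube power2_eq_square)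
  show "coprime (t3 m n) n" by (rule copshift[OF _ a2, of _ "2*m^2+3*m*n+n^2"]) (simp add: t3_def algebra_simps power3_eq_cube power2_eq_square)
  show "coprime (t3 m n) (m+n)" by (rule copshift[OF _ a3(2), of _ "m^2+m*n+2*n^2"]) (simp add: t3_def algebra_simps power3_eq_cube power2_eq_square)
  show "coprime (t1 m n) 2" "coprime (t2 m n) 2" "coprime (t3 m n) 2" using odd_t[OF cmn] by simp_all
qed


lemma abs1: fixes x y :: int assumes "\<bar>x\<bar> = 1" "\<bar>y\<bar> = 1" "x - y \<noteq> 0" "x + y \<noteq> 0" shows False
  using assms by (auto simp: abs_if split: if_splits)

lemma cop_add: fixes a b :: int assumes "coprime a b" shows "coprime a (a + b)"
  using assms by (simp add: coprime_iff_gcd_eq_1)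

lemma qpos: fixes m n :: int assumes "n \<noteq> 0" shows "m^2 + m*n + n^2 \<noteq> 0"
proof -
  have "4*(m^2 + m*n + n^2) = (2*m+n)^2 + 3*n^2" by (simp add: algebra_simps power2_eq_square)
  moreover have "n^2 > 0" using assms by simp
  moreover have "(2*m+n)^2 \<ge> 0" by simp
  ultimately have "m^2 + m*n + n^2 > 0" by (smt (verit))
  then show ?thesis by simp
qed

theorem theorem6:
  fixes m n :: int
  assumes "coprime m n" and "m * n * (m + n) \<noteq> 0"
  shows "(\<forall>i\<in>{1,2,3::nat}. \<forall>j\<in>{1,2,3::nat}. i \<noteq> j \<longrightarrow>
            coprime (num (cyc m n i)) (num (cyc m n j)))
       \<and> (\<forall>(p::int) i. prime p \<and> i \<in> {1,2,3::nat} \<and> p dvd num (cyc m n i) \<longrightarrow>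
            \<not> p dvd den (cpar m n) \<and>
            p dvd num ((cpar m n)^3 + 2 * (cpar m n)^2 + cpar m n + 1))
       \<and> card {i\<in>{1,2,3::nat}. \<bar>num (cyc m n i)\<bar> = 1} \<le> 1"
proof -
  note cf = copfacts[OF assms(1)]
  have m0: "m \<noteq> 0" and n0: "n \<noteq> 0" and mn0: "m + n \<noteq> 0" using assms(2) by auto
  define D where "D = 2*m*n*(m+n)"
  define A where "A = polyA m n"
  define s1 where "s1 = t1 m n"
  define s2 where "s2 = t2 m n"
  define s3 where "s3 = - t3 m n"
  have D0: "D \<noteq> 0" using m0 n0 mn0 by (simp add: D_def)
  have cD1: "coprime s1 D" using cf by (simp add: s1_def D_def)
  have cD2: "coprime s2 D" using cf by (simp add: s2_def D_def)
  have cD3: "coprime s3 D" using cf by (simp add: s3_def D_def)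
  have r1: "s2*D = s1^2 - A" and r2: "s3*D = s2^2 - A" and r3: "s1*D = s3^2 - A"
    using rels[of m n] by (simp_all add: s1_def s2_def s3_def D_def A_def)
  have c12: "coprime s1 s2"
  proof -
    have "-s2 = s1 + (-(2*m*m*(m+n)))" by (simp add: s1_def s2_def t1_def t2_def algebra_simps power3_eq_cube power2_eq_square)
    moreover have "coprime s1 (-(2*m*m*(m+n)))" using cf by (simp add: s1_def)
    ultimately have "coprime s1 (-s2)" by (metis cop_add)
    then show ?thesis by simp
  qed
  have c23: "coprime s2 s3"
  proof -
    have "-s3 = s2 + 2*n*(m+n)*(m+n)" by (simp add: s3_def s2_def t3_def t2_def algebra_simps power3_eq_cube power2_eq_square)
    moreover have "coprime s2 (2*n*(m+n)*(m+n))" using cf by (simp add: s2_def)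
    ultimately have "coprime s2 (-s3)" by (metis cop_add)
    then show ?thesis by simp
  qed
  have c31: "coprime s3 s1"
  proof -
    have "-s3 = s1 + 2*m*n*n" by (simp add: s3_def s1_def t3_def t1_def algebra_simps power3_eq_cube power2_eq_square)
    moreover have "coprime s1 (2*m*n*n)" using cf by (simp add: s1_def)
    ultimately have "coprime s1 (-s3)" by (metis cop_add)
    then show ?thesis by (simp add: coprime_commute)
  qed
  have x1: "cyc m n 1 = of_int s1 / of_int D" by (simp add: cyc_def s1_def D_def)
  have x2: "cyc m n 2 = of_int s2 / of_int D" by (simp add: cyc_def s2_def D_def)
  have x3: "cyc m n 3 = of_int s3 / of_int D" by (simp add: cyc_def s3_def D_def)
  have a1: "\<bar>num (cyc m n 1)\<bar> = \<bar>s1\<bar>" unfolding x1 by (rule num_abs[OF D0 cD1])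
  have a2: "\<bar>num (cyc m n 2)\<bar> = \<bar>s2\<bar>" unfolding x2 by (rule num_abs[OF D0 cD2])
  have a3: "\<bar>num (cyc m n 3)\<bar> = \<bar>s3\<bar>" unfolding x3 by (rule num_abs[OF D0 cD3])
  have cc: "coprime x y" if "\<bar>x\<bar> = \<bar>a\<bar>" "\<bar>y\<bar> = \<bar>b\<bar>" "coprime a b" for x y a b :: int
    using that by (metis coprime_abs_left_iff coprime_abs_right_iff)
  have partA: "\<forall>i\<in>{1,2,3::nat}. \<forall>j\<in>{1,2,3::nat}. i \<noteq> j \<longrightarrow>
            coprime (num (cyc m n i)) (num (cyc m n j))"
    using cc[OF a1 a2 c12] cc[OF a2 a3 c23] cc[OF a3 a1 c31]
    by (auto simp: coprime_commute)
  have cp: "cpar m n = of_int (-A) / of_int (D^2)"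
    by (simp add: cpar_def A_def D_def polyB_def power_mult_distrib)
  define N where "N = (D^2)^3 - A^3 + 2*A^2*D^2 - A*(D^2)^2"
  have ce: "(cpar m n)^3 + 2 * (cpar m n)^2 + cpar m n + 1 = of_int N / of_int ((D^2)^3)"
    unfolding cp N_def using D0 by (simp add: field_simps)
  have gen: "\<not> p dvd den (cpar m n) \<and> p dvd num ((cpar m n)^3 + 2 * (cpar m n)^2 + cpar m n + 1)"
    if pp: "prime p" and nD: "\<not> p dvd D" and nN: "p dvd N" for p
  proof
    show "\<not> p dvd den (cpar m n)"
    proof
      assume "p dvd den (cpar m n)"
      then have "p dvd D^2" using den_dvd[of "D^2" p "-A"] cp D0 pp by simp
      then show False using nD pp prime_dvd_power by blast
    qed
    have "\<not> p dvd (D^2)^3" using nD pp prime_dvd_power by blast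
    then show "p dvd num ((cpar m n)^3 + 2 * (cpar m n)^2 + cpar m n + 1)"
      unfolding ce using num_dvd[of "(D^2)^3" p N] D0 pp nN by simp
  qed
  have c21: "coprime s2 s1" "coprime s3 s2" "coprime s1 s3" using c12 c23 c31 by (simp_all add: coprime_commute)
  have partB: "\<forall>(p::int) i. prime p \<and> i \<in> {1,2,3::nat} \<and> p dvd num (cyc m n i) \<longrightarrow>
            \<not> p dvd den (cpar m n) \<and>
            p dvd num ((cpar m n)^3 + 2 * (cpar m n)^2 + cpar m n + 1)"
  proof (intro allI impI)
    fix p :: int and i :: nat
    assume h: "prime p \<and> i \<in> {1,2,3::nat} \<and> p dvd num (cyc m n i)"
    then have pp: "prime p" by simp
    have "p dvd \<bar>num (cyc m n i)\<bar>" using h by simp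
    note pd = this
    have hi: "i = 1 \<or> i = 2 \<or> i = 3" using h by auto
    then have "(p dvd s1 \<and> i = 1) \<or> (p dvd s2 \<and> i = 2) \<or> (p dvd s3 \<and> i = 3)"
    proof (elim disjE)
      assume i: "i = 1" then have "p dvd \<bar>s1\<bar>" using pd a1 by metis
      then show ?thesis using i by simp
    next
      assume i: "i = 2" then have "p dvd \<bar>s2\<bar>" using pd a2 by metis
      then show ?thesis using i by simp
    next
      assume i: "i = 3" then have "p dvd \<bar>s3\<bar>" using pd a3 by metis
      then show ?thesis using i by simp
    qed
    then have "\<not> p dvd D \<and> p dvd N"
    proof (elim disjE conjE)
      assume "p dvd s1" then show ?thesis using partb[OF r1 r2 r3 cD1 c12 pp] N_def by simp
    next
      assume "p dvd s2" then show ?thesis using partb[OF r2 r3 r1 cD2 c23 pp] N_def by simp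
    next
      assume "p dvd s3" then show ?thesis using partb[OF r3 r1 r2 cD3 c31 pp] N_def by simp
    qed
    then show "\<not> p dvd den (cpar m n) \<and> p dvd num ((cpar m n)^3 + 2 * (cpar m n)^2 + cpar m n + 1)"
      using gen pp by blast
  qed
  have q0: "m^2 + m*n + n^2 \<noteq> 0" using qpos n0 by blast
  have n12: "\<not> (\<bar>s1\<bar> = 1 \<and> \<bar>s2\<bar> = 1)"
  proof
    assume h: "\<bar>s1\<bar> = 1 \<and> \<bar>s2\<bar> = 1"
    have "s1 - s2 = 2*n*(m^2+m*n+n^2)" by (simp add: s1_def s2_def t1_def t2_def algebra_simps power3_eq_cube power2_eq_square)
    moreover have "s1 + s2 = 2*m*m*(m+n)" by (simp add: s1_def s2_def t1_def t2_def algebra_simps power3_eq_cube power2_eq_square)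
    ultimately show False using abs1[of s1 s2] h q0 m0 n0 mn0 by simp
  qed
  have n13: "\<not> (\<bar>s1\<bar> = 1 \<and> \<bar>s3\<bar> = 1)"
  proof
    assume h: "\<bar>s1\<bar> = 1 \<and> \<bar>s3\<bar> = 1"
    have "s1 + s3 = -(2*m*n*n)" by (simp add: s1_def s3_def t1_def t3_def algebra_simps power3_eq_cube power2_eq_square)
    moreover have "s1 - s3 = 2*(m+n)*(m^2+m*n+n^2)" by (simp add: s1_def s3_def t1_def t3_def algebra_simps power3_eq_cube power2_eq_square)
    ultimately show False using abs1[of s1 s3] h q0 m0 n0 mn0 by simp
  qed
  have n23: "\<not> (\<bar>s2\<bar> = 1 \<and> \<bar>s3\<bar> = 1)"
  proof
    assume h: "\<bar>s2\<bar> = 1 \<and> \<bar>s3\<bar> = 1"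
    have "s2 + s3 = -(2*n*(m+n)*(m+n))" by (simp add: s2_def s3_def t2_def t3_def algebra_simps power3_eq_cube power2_eq_square)
    moreover have "s2 - s3 = 2*m*(m^2+m*n+n^2)" by (simp add: s2_def s3_def t2_def t3_def algebra_simps power3_eq_cube power2_eq_square)
    ultimately show False using abs1[of s2 s3] h q0 m0 n0 mn0 by simp
  qed
  have "\<exists>k. {i\<in>{1,2,3::nat}. \<bar>num (cyc m n i)\<bar> = 1} \<subseteq> {k}"
  proof (cases "\<bar>s1\<bar> = 1")
    case True then show ?thesis using n12 n13 a1 a2 a3 by (intro exI[of _ 1]) auto
  next
    case False
    show ?thesis
    proof (cases "\<bar>s2\<bar> = 1")
      case True then show ?thesis using False n23 a1 a2 a3 by (intro exI[of _ 2]) auto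
    next
      case F2: False
      show ?thesis using False F2 a1 a2 a3 by (intro exI[of _ 3]) auto
    qed
  qed
  then obtain k where "{i\<in>{1,2,3::nat}. \<bar>num (cyc m n i)\<bar> = 1} \<subseteq> {k}" by blast
  then have partC: "card {i\<in>{1,2,3::nat}. \<bar>num (cyc m n i)\<bar> = 1} \<le> 1"
    using card_mono[of "{k}"] by fastforce
  show ?thesis using partA partB partC by blast
qed

end
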